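(* Suppose that $Q_ph(x)=M_p(g_{p+1}h)(x)$ for Markov kernels $M_p$ and nonnegative measurable potentials $g_{p+1}$, and that (MG) holds: (i) there are constants $0<\sigma_-<\sigma_+<\infty$ and $\varphi\in\mathcal P(\mathcal X)$ with $\sigma_-\varphi(A)\le M_p(x,A)\le\sigma_+\varphi(A)$ for all $p\ge0$, $x\in\mathsf X$, $A\in\mathcal X$; (ii) $w_+:=\sup_p\|w_p\|_\infty<\infty$; (iii) $c_-:=\inf_{p,x}Q_p\mathbf 1(x)>0$. Let $\rho=1-\sigma_-/\sigma_+$ and, for $n\ge1$ and $h\in\mathrm B(\mathcal X)$, $$\sigma_n^2(h)=\sum_{\ell=0}^{n-1}(n-\ell)\frac{\eta_\ell R_\ell\{w_\ell^2\,[Q_{\ell+1}\cdots Q_{n-1}(h-\eta_nh)]^2\}}{(\eta_\ell Q_\ell\cdots Q_{n-1}\mathbf 1)^2}$$ (the asymptotic variance of the double bootstrap algorithm). Then for all $n\ge1$ and $h\in\mathrm B(\mathcal X)$, $$\sigma_n^2(h)\le w_+\frac{\mathrm{osc}(h)^2}{(1-\rho)^2(1-\rho^2)^2c_-}.$$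
   Context: $(\mathsf X,\mathcal X)$ a measurable space; $\mathrm B(\mathcal X)$ bounded real measurable functions, $\mathcal P(\mathcal X)$ probability measures, $\nu h=\int h\,d\nu$, $\|h\|_\infty=\sup|h|$, $\mathrm{osc}(h)=\sup_{x,x'}|h(x)-h(x')|$, $\mathbf 1$ the constant one. Feynman–Kac flow: $\eta_0\in\mathcal P(\mathcal X)$, $\eta_{p+1}h=\eta_pQ_ph/\eta_pQ_p\mathbf 1$ with $Q_p\mathbf 1$ bounded. $R_p$ are Markov kernels on $\mathsf X$ with $Q_p(x,\cdot)\ll R_p(x,\cdot)$ and $w_p(x,x')=\frac{dQ_p(x,\cdot)}{dR_p(x,\cdot)}(x')$ nonnegative bounded measurable; $R_p(w_p^2f)(x)=\int w_p^2(x,x')f(x')R_p(x,dx')$. Convention: $Q_{\ell+1}\cdots Q_{n-1}=\mathrm{id}$ if $\ell+1>n-1$; kernel products $(KL)(x,A)=\int K(x,dy)L(y,A)$. *)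

theory Defs
  imports "HOL-Probability.Probability"
begin

definition Qop :: "(nat \<Rightarrow> 'a \<Rightarrow> 'a measure) \<Rightarrow> (nat \<Rightarrow> 'a \<Rightarrow> real) \<Rightarrow> nat
                   \<Rightarrow> ('a \<Rightarrow> real) \<Rightarrow> 'a \<Rightarrow> real" where
  "Qop M g p f x = (\<integral>y. g (Suc p) y * f y \<partial>(M p x))"

definition Qprod :: "(nat \<Rightarrow> 'a \<Rightarrow> 'a measure) \<Rightarrow> (nat \<Rightarrow> 'a \<Rightarrow> real) \<Rightarrow> nat \<Rightarrow> nat
                   \<Rightarrow> ('a \<Rightarrow> real) \<Rightarrow> 'a \<Rightarrow> real" where
  "Qprod M g l n h = foldr (\<lambda>p f. Qop M g p f) [l..<n] h"

definition osc :: "'a measure \<Rightarrow> ('a \<Rightarrow> real) \<Rightarrow> real" where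
  "osc X h = (SUP xy \<in> space X \<times> space X. \<bar>h (fst xy) - h (snd xy)\<bar>)"

definition sigma2 :: "'a measure \<Rightarrow> (nat \<Rightarrow> 'a \<Rightarrow> 'a measure) \<Rightarrow> (nat \<Rightarrow> 'a \<Rightarrow> real)
    \<Rightarrow> (nat \<Rightarrow> 'a \<Rightarrow> 'a measure) \<Rightarrow> (nat \<Rightarrow> 'a \<Rightarrow> 'a \<Rightarrow> real) \<Rightarrow> (nat \<Rightarrow> 'a measure)
    \<Rightarrow> nat \<Rightarrow> ('a \<Rightarrow> real) \<Rightarrow> real" where
  "sigma2 X M g R w eta n h =
     (\<Sum>l<n. real (n - l) *
        (\<integral>x. (\<integral>y. (w l x y)\<^sup>2 *
              (Qprod M g (Suc l) n (\<lambda>z. h z - (\<integral>u. h u \<partial>eta n)) y)\<^sup>2 \<partial>(R l x)) \<partial>(eta l))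
        / (\<integral>x. Qprod M g l n (\<lambda>_. 1) x \<partial>(eta l))\<^sup>2)"

end

theory Submission
  imports Defs
begin


lemma aux_mono: "A / B \<le> C \<Longrightarrow> 0 \<le> (k::real) \<Longrightarrow> k * A / B \<le> k * C"
  by (metis times_divide_eq_right mult_left_mono)

lemma sum_geom_closed: "(\<Sum>j<n. real (Suc j) * q ^ j) * (1 - q)\<^sup>2 = 1 - real (Suc n) * q ^ n + real n * q ^ Suc n"
  by (induction n) (simp_all add: algebra_simps power2_eq_square)

lemma sum_geom_le:
  fixes q :: real assumes "0 \<le> q" "q < 1"
  shows "(\<Sum>j<n. real (Suc j) * q ^ j) \<le> 1 / (1 - q)\<^sup>2"
proof -
  have "real n * q \<le> real n" using assms by (simp add: mult_left_le)
  then have "0 \<le> q ^ n * (real (Suc n) - real n * q)" using assms by simp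
  then have "(\<Sum>j<n. real (Suc j) * q ^ j) * (1 - q)\<^sup>2 \<le> 1"
    unfolding sum_geom_closed by (simp add: algebra_simps)
  then show ?thesis using assms by (simp add: field_simps)
qed

locale fk =
  fixes X :: "'a measure" and M :: "nat \<Rightarrow> 'a \<Rightarrow> 'a measure" and g :: "nat \<Rightarrow> 'a \<Rightarrow> real"
    and phi :: "'a measure" and sigm sigp c :: real
  assumes M_kernel: "\<And>p. M p \<in> X \<rightarrow>\<^sub>M prob_algebra X"
    and g_meas: "\<And>p. g p \<in> borel_measurable X"
    and g_nonneg: "\<And>p x. x \<in> space X \<Longrightarrow> g p x \<ge> 0"
    and Q1_bdd: "\<And>p. bdd_above ((\<lambda>x. Qop M g p (\<lambda>_. 1) x) ` space X)"
    and phi_prob: "phi \<in> space (prob_algebra X)"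
    and sig_pos: "0 < sigm" and sig_lt: "sigm < sigp"
    and MG1: "\<And>p x A. x \<in> space X \<Longrightarrow> A \<in> sets X \<Longrightarrow>
          sigm * measure phi A \<le> measure (M p x) A \<and> measure (M p x) A \<le> sigp * measure phi A"
    and c_pos: "0 < c"
    and c_le: "\<And>p x. x \<in> space X \<Longrightarrow> c \<le> Qop M g p (\<lambda>_. 1) x"
begin

definition bm :: "('a \<Rightarrow> real) \<Rightarrow> bool" where
  "bm f \<longleftrightarrow> f \<in> borel_measurable X \<and> (\<exists>C. \<forall>x\<in>space X. \<bar>f x\<bar> \<le> C)"

lemma Mx:
  assumes "x \<in> space X"
  shows "prob_space (M p x)" "sets (M p x) = sets X" "space (M p x) = space X"
proof -
  have "M p x \<in> space (prob_algebra X)" using measurable_space[OF M_kernel assms] .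
  then show "prob_space (M p x)" "sets (M p x) = sets X" "space (M p x) = space X"
    by (auto simp: space_prob_algebra dest: sets_eq_imp_space_eq)
qed

lemma phi_facts: "prob_space phi" "sets phi = sets X" "space phi = space X"
  using phi_prob by (auto simp: space_prob_algebra dest: sets_eq_imp_space_eq)

lemma Qop1: "Qop M g p (\<lambda>_. 1) x = (\<integral>y. g (Suc p) y \<partial>M p x)"
  by (simp add: Qop_def)

lemma g_int:
  assumes "x \<in> space X" shows "integrable (M p x) (g (Suc p))"
proof (rule ccontr)
  assume "\<not> ?thesis"
  then have "Qop M g p (\<lambda>_. 1) x = 0" by (simp add: Qop1 not_integrable_integral_eq)
  with c_le[OF assms, of p] c_pos show False by simp
qed

lemma bmD: assumes "bm f" obtains C where "C \<ge> 0" "\<And>x. x \<in> space X \<Longrightarrow> \<bar>f x\<bar> \<le> C"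
proof -
  from assms obtain C where "\<forall>x\<in>space X. \<bar>f x\<bar> \<le> C" unfolding bm_def by auto
  then show ?thesis using that[of "max C 0"] by force
qed

lemma bm_meas: "bm f \<Longrightarrow> f \<in> borel_measurable X" by (simp add: bm_def)

lemma int_gf:
  assumes x: "x \<in> space X" and f: "bm f"
  shows "integrable (M p x) (\<lambda>y. g (Suc p) y * f y)"
proof -
  obtain C where C: "C \<ge> 0" "\<And>x. x \<in> space X \<Longrightarrow> \<bar>f x\<bar> \<le> C" using bmD[OF f] by blast
  have i: "integrable (M p x) (\<lambda>y. C * g (Suc p) y)" using g_int[OF x] by simp
  have "(\<lambda>y. g (Suc p) y * f y) \<in> borel_measurable X"
      using g_meas bm_meas[OF f] by (intro borel_measurable_times) auto
  then have m: "(\<lambda>y. g (Suc p) y * f y) \<in> borel_measurable (M p x)"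
      by (simp add: measurable_cong_sets[OF Mx(2)[OF x] refl])
  have a: "AE y in M p x. norm (g (Suc p) y * f y) \<le> norm (C * g (Suc p) y)"
      using C g_nonneg Mx(3)[OF x]
      by (auto intro!: AE_I2 simp: abs_mult mult_right_mono mult.commute)
  show ?thesis by (rule Bochner_Integration.integrable_bound[OF i m a])
qed

lemma Qop_meas: assumes "f \<in> borel_measurable X" shows "Qop M g p f \<in> borel_measurable X"
proof -
  have 1: "(\<lambda>N. integral\<^sup>L N (\<lambda>y. g (Suc p) y * f y)) \<in> subprob_algebra X \<rightarrow>\<^sub>M borel"
    using assms g_meas by (intro integral_measurable_subprob_algebra) auto
  have "(\<lambda>x. integral\<^sup>L (M p x) (\<lambda>y. g (Suc p) y * f y)) \<in> borel_measurable X"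
    using measurable_compose[OF measurable_prob_algebraD[OF M_kernel] 1] .
  then show ?thesis unfolding Qop_def by simp
qed

lemma Qop_cong:
  assumes "x \<in> space X" "\<And>y. y \<in> space X \<Longrightarrow> f y = f' y"
  shows "Qop M g p f x = Qop M g p f' x"
  unfolding Qop_def by (rule Bochner_Integration.integral_cong[OF refl]) (simp add: Mx(3)[OF assms(1)] assms(2))

lemma Qop_mono:
  assumes x: "x \<in> space X" and "bm f" "bm f'" and le: "\<And>y. y \<in> space X \<Longrightarrow> f y \<le> f' y"
  shows "Qop M g p f x \<le> Qop M g p f' x"
  unfolding Qop_def
  using int_gf[OF x assms(2)] int_gf[OF x assms(3)] le g_nonneg Mx(3)[OF x]
  by (intro integral_mono) (auto intro: mult_left_mono)

lemma Qop_add: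
  assumes x: "x \<in> space X" and "bm f" "bm f'"
  shows "Qop M g p (\<lambda>y. f y + f' y) x = Qop M g p f x + Qop M g p f' x"
  unfolding Qop_def
  using int_gf[OF x assms(2)] int_gf[OF x assms(3)]
  by (simp add: distrib_left)

lemma Qop_scale:
  shows "Qop M g p (\<lambda>y. a * f y) x = a * Qop M g p f x"
  unfolding Qop_def by (simp add: mult.left_commute)

lemma Q1_le: obtains B where "\<And>x. x \<in> space X \<Longrightarrow> Qop M g p (\<lambda>_. 1) x \<le> B"
  using Q1_bdd[of p] by (auto simp: bdd_above_def)

lemma bm_const: "bm (\<lambda>_. a)" unfolding bm_def by auto

lemma Qop_abs:
  assumes x: "x \<in> space X" and f: "bm f" and C: "\<And>y. y \<in> space X \<Longrightarrow> \<bar>f y\<bar> \<le> C"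
  shows "\<bar>Qop M g p f x\<bar> \<le> C * Qop M g p (\<lambda>_. 1) x"
proof -
  have "Qop M g p f x \<le> Qop M g p (\<lambda>_. C) x"
    using C by (intro Qop_mono[OF x f bm_const]) (auto simp: abs_le_iff)
  moreover have "Qop M g p (\<lambda>y. - C) x \<le> Qop M g p f x"
    by (intro Qop_mono[OF x bm_const f]) (use C in \<open>force simp: abs_le_iff\<close>)
  moreover have "Qop M g p (\<lambda>_. C) x = C * Qop M g p (\<lambda>_. 1) x"
    using Qop_scale[of p "C" "\<lambda>_. 1" x] by simp
  moreover have "Qop M g p (\<lambda>_. - C) x = - C * Qop M g p (\<lambda>_. 1) x"
    using Qop_scale[of p "-C" "\<lambda>_. 1" x] by simp
  ultimately show ?thesis by (simp add: abs_le_iff)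
qed

lemma bm_Qop: assumes "bm f" shows "bm (Qop M g p f)"
proof -
  obtain C where C: "C \<ge> 0" "\<And>x. x \<in> space X \<Longrightarrow> \<bar>f x\<bar> \<le> C" using bmD[OF assms] by blast
  obtain B where B: "\<And>x. x \<in> space X \<Longrightarrow> Qop M g p (\<lambda>_. 1) x \<le> B" using Q1_le by blast
  have "\<forall>x\<in>space X. \<bar>Qop M g p f x\<bar> \<le> C * B"
    using Qop_abs[OF _ assms C(2)] B C(1) by (meson mult_left_mono order_trans)
  then show ?thesis unfolding bm_def using Qop_meas bm_meas[OF assms] by blast
qed


lemma scale_lo: assumes x: "x \<in> space X" shows "scale_measure (ennreal sigm) phi \<le> M p x"
proof -
  have "emeasure (scale_measure (ennreal sigm) phi) A \<le> emeasure (M p x) A" for A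
  proof (cases "A \<in> sets X")
    case True
    have "ennreal sigm * emeasure phi A = ennreal (sigm * measure phi A)"
      using finite_measure.emeasure_eq_measure[OF prob_space.axioms(1)[OF phi_facts(1)]] sig_pos by (simp add: ennreal_mult)
    also have "\<dots> \<le> ennreal (measure (M p x) A)" using MG1[OF x True, of p] by simp
    also have "\<dots> = emeasure (M p x) A" using finite_measure.emeasure_eq_measure[OF prob_space.axioms(1)[OF Mx(1)[OF x]]] by simp
    finally show ?thesis by simp
  next
    case False then show ?thesis using phi_facts Mx[OF x] by (simp add: emeasure_notin_sets)
  qed
  then show ?thesis using phi_facts Mx[OF x]
    by (simp add: le_measure_iff space_scale_measure le_fun_def)
qed

lemma scale_hi: assumes x: "x \<in> space X" shows "M p x \<le> scale_measure (ennreal sigp) phi"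
proof -
  have "emeasure (M p x) A \<le> emeasure (scale_measure (ennreal sigp) phi) A" for A
  proof (cases "A \<in> sets X")
    case True
    have "emeasure (M p x) A = ennreal (measure (M p x) A)" using finite_measure.emeasure_eq_measure[OF prob_space.axioms(1)[OF Mx(1)[OF x]]] by simp
    also have "\<dots> \<le> ennreal (sigp * measure phi A)" using MG1[OF x True, of p] by (intro ennreal_leI) simp
    also have "\<dots> = ennreal sigp * emeasure phi A"
      using finite_measure.emeasure_eq_measure[OF prob_space.axioms(1)[OF phi_facts(1)]] sig_pos sig_lt by (simp add: ennreal_mult)
    finally show ?thesis by simp
  next
    case False then show ?thesis using phi_facts Mx[OF x] by (simp add: emeasure_notin_sets)
  qed
  then show ?thesis using phi_facts Mx[OF x]
    by (simp add: le_measure_iff space_scale_measure le_fun_def)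
qed

lemma minor:
  assumes x: "x \<in> space X" and v: "bm v" and v0: "\<And>y. y \<in> space X \<Longrightarrow> 0 \<le> v y"
  shows "integrable phi (\<lambda>y. g (Suc p) y * v y)"
    and "sigm * (\<integral>y. g (Suc p) y * v y \<partial>phi) \<le> Qop M g p v x"
    and "Qop M g p v x \<le> sigp * (\<integral>y. g (Suc p) y * v y \<partial>phi)"
proof -
  define F where "F = (\<lambda>y. g (Suc p) y * v y)"
  have FX: "F \<in> borel_measurable X"
    unfolding F_def using g_meas bm_meas[OF v] by (intro borel_measurable_times) auto
  have Fphi: "F \<in> borel_measurable phi" using FX by (simp add: measurable_cong_sets[OF phi_facts(2) refl])
  have F0: "\<And>y. y \<in> space X \<Longrightarrow> 0 \<le> F y" unfolding F_def using g_nonneg v0 by simp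
  have iM: "integrable (M p x) F" unfolding F_def by (rule int_gf[OF x v])
  have Q: "Qop M g p v x = integral\<^sup>L (M p x) F" unfolding Qop_def F_def ..
  have Q0: "0 \<le> Qop M g p v x" unfolding Q using F0 Mx(3)[OF x] by (intro integral_nonneg_AE AE_I2) auto
  have NM: "(\<integral>\<^sup>+y. F y \<partial>M p x) = ennreal (Qop M g p v x)"
    unfolding Q using F0 Mx(3)[OF x] by (intro nn_integral_eq_integral[OF iM] AE_I2) auto
  have lo: "ennreal sigm * (\<integral>\<^sup>+y. F y \<partial>phi) \<le> (\<integral>\<^sup>+y. F y \<partial>M p x)"
  proof -
    have "ennreal sigm * (\<integral>\<^sup>+y. F y \<partial>phi) = (\<integral>\<^sup>+y. F y \<partial>scale_measure (ennreal sigm) phi)"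
      using Fphi by (simp add: nn_integral_scale_measure)
    also have "\<dots> \<le> (\<integral>\<^sup>+y. F y \<partial>M p x)"
      using Mx[OF x] phi_facts by (intro nn_integral_mono_measure scale_lo[OF x]) simp
    finally show ?thesis .
  qed
  have hi: "(\<integral>\<^sup>+y. F y \<partial>M p x) \<le> ennreal sigp * (\<integral>\<^sup>+y. F y \<partial>phi)"
  proof -
    have "(\<integral>\<^sup>+y. F y \<partial>M p x) \<le> (\<integral>\<^sup>+y. F y \<partial>scale_measure (ennreal sigp) phi)"
      using Mx[OF x] phi_facts by (intro nn_integral_mono_measure scale_hi[OF x]) simp
    also have "\<dots> = ennreal sigp * (\<integral>\<^sup>+y. F y \<partial>phi)"
      using Fphi by (simp add: nn_integral_scale_measure)
    finally show ?thesis .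
  qed
  have fin: "(\<integral>\<^sup>+y. F y \<partial>phi) < \<infinity>"
  proof (rule ccontr)
    assume "\<not> ?thesis"
    then have "(\<integral>\<^sup>+y. F y \<partial>phi) = \<infinity>" by (metis less_top infinity_ennreal_def)
    then have "ennreal sigm * (\<integral>\<^sup>+y. F y \<partial>phi) = \<infinity>" using sig_pos by (simp add: ennreal_mult_top)
    with lo have "\<top> \<le> (\<integral>\<^sup>+y. F y \<partial>M p x)" by simp
    then show False by (simp add: top_unique NM)
  qed
  have ip: "integrable phi F"
    using Fphi F0 phi_facts fin by (intro integrableI_nonneg AE_I2) auto
  then show "integrable phi (\<lambda>y. g (Suc p) y * v y)" unfolding F_def .
  have I0: "0 \<le> integral\<^sup>L phi F" using F0 phi_facts by (intro integral_nonneg_AE AE_I2) auto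
  have Nphi: "(\<integral>\<^sup>+y. F y \<partial>phi) = ennreal (integral\<^sup>L phi F)"
    using F0 phi_facts by (intro nn_integral_eq_integral[OF ip] AE_I2) auto
  have "ennreal (sigm * integral\<^sup>L phi F) \<le> ennreal (Qop M g p v x)"
    using lo NM Nphi sig_pos I0 by (simp add: ennreal_mult)
  then show "sigm * (\<integral>y. g (Suc p) y * v y \<partial>phi) \<le> Qop M g p v x"
    using Q0 unfolding F_def by (simp add: ennreal_le_iff)
  have "ennreal (Qop M g p v x) \<le> ennreal (sigp * integral\<^sup>L phi F)"
    using hi NM Nphi sig_pos sig_lt I0 by (simp add: ennreal_mult)
  then show "Qop M g p v x \<le> sigp * (\<integral>y. g (Suc p) y * v y \<partial>phi)"
    using I0 sig_pos sig_lt unfolding F_def by (simp add: ennreal_le_iff)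
qed


lemma bm_mult: assumes "bm f" "bm f'" shows "bm (\<lambda>y. f y * f' y)"
proof -
  obtain C where C: "C \<ge> 0" "\<And>x. x \<in> space X \<Longrightarrow> \<bar>f x\<bar> \<le> C" using bmD[OF assms(1)] by blast
  obtain D where D: "D \<ge> 0" "\<And>x. x \<in> space X \<Longrightarrow> \<bar>f' x\<bar> \<le> D" using bmD[OF assms(2)] by blast
  have "\<forall>x\<in>space X. \<bar>f x * f' x\<bar> \<le> C * D"
    using C D by (auto simp: abs_mult intro: mult_mono)
  then show ?thesis using assms unfolding bm_def by (auto intro: borel_measurable_times)
qed

lemma bm_add: assumes "bm f" "bm f'" shows "bm (\<lambda>y. f y + f' y)"
proof -
  obtain C where C: "C \<ge> 0" "\<And>x. x \<in> space X \<Longrightarrow> \<bar>f x\<bar> \<le> C" using bmD[OF assms(1)] by blast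
  obtain D where D: "D \<ge> 0" "\<And>x. x \<in> space X \<Longrightarrow> \<bar>f' x\<bar> \<le> D" using bmD[OF assms(2)] by blast
  have "\<forall>x\<in>space X. \<bar>f x + f' x\<bar> \<le> C + D"
    using C D by (auto intro: abs_triangle_ineq[THEN order_trans] add_mono)
  then show ?thesis using assms unfolding bm_def by (auto intro: borel_measurable_add)
qed

lemma bm_cmult: assumes "bm f" shows "bm (\<lambda>y. a * f y)"
  using bm_mult[OF bm_const assms] .

lemma bm_diff: assumes "bm f" "bm f'" shows "bm (\<lambda>y. f y - f' y)"
  using bm_add[OF assms(1) bm_cmult[OF assms(2), of "-1"]] by simp

lemma bm_div: assumes "bm f" "bm B" "0 < b0" "\<And>y. y \<in> space X \<Longrightarrow> b0 \<le> B y"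
  shows "bm (\<lambda>y. f y / B y)"
proof -
  obtain C where C: "C \<ge> 0" "\<And>x. x \<in> space X \<Longrightarrow> \<bar>f x\<bar> \<le> C" using bmD[OF assms(1)] by blast
  have "\<bar>f x / B x\<bar> \<le> C / b0" if "x \<in> space X" for x
  proof -
    have "\<bar>f x / B x\<bar> = \<bar>f x\<bar> / B x" using assms(3) assms(4)[OF that] by simp
    also have "\<dots> \<le> C / B x" using C(2)[OF that] assms(3) assms(4)[OF that] by (simp add: divide_right_mono)
    also have "\<dots> \<le> C / b0" using C(1) assms(3) assms(4)[OF that] by (simp add: divide_left_mono)
    finally show ?thesis .
  qed
  then show ?thesis using assms(1,2) unfolding bm_def by (auto intro: borel_measurable_divide)
qed

lemma Qprod_Suc: "p < n \<Longrightarrow> Qprod M g p n f = Qop M g p (Qprod M g (Suc p) n f)"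
  by (simp add: Qprod_def upt_conv_Cons)

lemma Qprod_ge: "n \<le> p \<Longrightarrow> Qprod M g p n f = f"
  by (simp add: Qprod_def)

lemma bm_Qprod: assumes "bm f" shows "bm (Qprod M g p n f)"
proof (cases "p \<le> n")
  case True then show ?thesis
  proof (induction p rule: inc_induct)
    case base then show ?case using assms by (simp add: Qprod_ge)
  next
    case (step q) then show ?case by (simp add: Qprod_Suc bm_Qop)
  qed
next
  case False then show ?thesis using assms by (simp add: Qprod_ge)
qed

definition G :: "nat \<Rightarrow> nat \<Rightarrow> 'a \<Rightarrow> real" where "G n p = Qprod M g p n (\<lambda>_. 1)"

lemma bm_G: "bm (G n p)" unfolding G_def by (rule bm_Qprod[OF bm_const])

lemma G_n: "G n n = (\<lambda>_. 1)" unfolding G_def by (simp add: Qprod_ge)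

lemma G_Suc: "p < n \<Longrightarrow> G n p = Qop M g p (G n (Suc p))" unfolding G_def by (simp add: Qprod_Suc)

lemma G_lower: assumes "p \<le> n" shows "\<And>y. y \<in> space X \<Longrightarrow> c ^ (n - p) \<le> G n p y"
  using assms
proof (induction p rule: inc_induct)
  case base then show ?case by (simp add: G_n)
next
  case (step q y)
  have "c ^ (n - q) = c ^ (n - Suc q) * c"
    using step(2) by (metis Suc_diff_Suc power_Suc2)
  also have "\<dots> \<le> c ^ (n - Suc q) * Qop M g q (\<lambda>_. 1) y"
    using c_le[OF step(4)] c_pos by (simp add: mult_left_mono)
  also have "\<dots> = Qop M g q (\<lambda>_. c ^ (n - Suc q)) y" using Qop_scale[of q "c ^ (n - Suc q)" "\<lambda>_. 1" y] by simp
  also have "\<dots> \<le> Qop M g q (G n (Suc q)) y"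
    using step(3) by (intro Qop_mono[OF step(4) bm_const bm_G])
  also have "\<dots> = G n q y" using G_Suc[OF step(2)] by simp
  finally show ?case .
qed

lemma G_pos: "p \<le> n \<Longrightarrow> y \<in> space X \<Longrightarrow> 0 < G n p y"
  using G_lower[of p n y] c_pos by (meson order_less_le_trans zero_less_power)

lemma G_ratio: assumes "p \<le> n" "y \<in> space X" "y' \<in> space X"
  shows "G n p y \<le> (sigp / sigm) * G n p y'"
proof (cases "p = n")
  case True then show ?thesis using sig_pos sig_lt by (simp add: G_n)
next
  case False
  then have pn: "p < n" using assms by simp
  define P where "P = (\<integral>z. g (Suc p) z * G n (Suc p) z \<partial>phi)"
  have v0: "\<And>z. z \<in> space X \<Longrightarrow> 0 \<le> G n (Suc p) z" using G_pos pn by (meson less_eq_real_def Suc_leI)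
  have 1: "G n p y \<le> sigp * P" using minor(3)[OF assms(2) bm_G v0] G_Suc[OF pn] by (simp add: P_def)
  have 2: "sigm * P \<le> G n p y'" using minor(2)[OF assms(3) bm_G v0] G_Suc[OF pn] by (simp add: P_def)
  have "sigp * P = (sigp / sigm) * (sigm * P)" using sig_pos by simp
  also have "\<dots> \<le> (sigp / sigm) * G n p y'" using 2 sig_pos sig_lt by (intro mult_left_mono) auto
  finally show ?thesis using 1 by simp
qed

lemma arith_contr:
  fixes sm sp b b' a a' q q1 q2 r :: real
  assumes "0 < sm" "sm < sp" "0 < b" "0 < b'" "0 \<le> q1" "0 \<le> q2" "q2 = r * q - q1"
    "sm * q1 \<le> a" "sm * q2 \<le> r * b - a" "b \<le> sp * q" "sm * q1 \<le> a'" "b' \<le> sp * q"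
  shows "a / b - a' / b' \<le> (1 - sm / sp) * r"
proof -
  have Pp: "0 < q" using assms(3,10,2,1) by (smt (verit) mult_nonneg_nonpos)
  have "a / b \<le> r - sm * q2 / b" using assms(3,9) by (simp add: field_simps)
  also have "\<dots> \<le> r - sm * q2 / (sp * q)"
    using assms(1,3,6,10) by (intro diff_left_mono divide_left_mono mult_nonneg_nonneg) auto
  finally have A: "a / b \<le> r - sm * q2 / (sp * q)" .
  have "sm * q1 / (sp * q) \<le> sm * q1 / b'"
    using assms(1,4,5,12) by (intro divide_left_mono mult_nonneg_nonneg) auto
  also have "\<dots> \<le> a' / b'" using assms(4,11) by (simp add: divide_right_mono)
  finally have B: "sm * q1 / (sp * q) \<le> a' / b'" .
  have e: "q1 + q2 = q * r" using assms(7) by simp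
  have "sm * q2 / (sp * q) + sm * q1 / (sp * q) = sm * (q1 + q2) / (sp * q)"
    by (simp add: add_divide_distrib algebra_simps)
  also have "\<dots> = sm * r / sp" using e Pp by simp
  finally have "sm * q2 / (sp * q) + sm * q1 / (sp * q) = sm * r / sp" .
  then show ?thesis using A B by (simp add: field_simps)
qed


lemma contr1:
  assumes x: "x \<in> space X" and x': "x' \<in> space X" and B: "bm B" and B0: "\<And>y. y \<in> space X \<Longrightarrow> 0 \<le> B y"
    and u: "bm u" and u0: "\<And>y. y \<in> space X \<Longrightarrow> 0 \<le> u y" and u1: "\<And>y. y \<in> space X \<Longrightarrow> u y \<le> r"
    and b: "0 < Qop M g p B x" and b': "0 < Qop M g p B x'"
  shows "Qop M g p (\<lambda>y. B y * u y) x / Qop M g p B x - Qop M g p (\<lambda>y. B y * u y) x' / Qop M g p B x'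
         \<le> (1 - sigm / sigp) * r"
proof -
  have Bu: "bm (\<lambda>y. B y * u y)" using bm_mult[OF B u] .
  have Bv: "bm (\<lambda>y. B y * (r - u y))" using bm_mult[OF B bm_diff[OF bm_const u]] .
  have Bu0: "\<And>y. y \<in> space X \<Longrightarrow> 0 \<le> B y * u y" using B0 u0 by simp
  have Bv0: "\<And>y. y \<in> space X \<Longrightarrow> 0 \<le> B y * (r - u y)" using B0 u1 by simp
  define q where "q = (\<integral>y. g (Suc p) y * B y \<partial>phi)"
  define q1 where "q1 = (\<integral>y. g (Suc p) y * (B y * u y) \<partial>phi)"
  define q2 where "q2 = (\<integral>y. g (Suc p) y * (B y * (r - u y)) \<partial>phi)"
  have iq: "integrable phi (\<lambda>y. g (Suc p) y * B y)" using minor(1)[OF x B B0] .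
  have iq1: "integrable phi (\<lambda>y. g (Suc p) y * (B y * u y))" using minor(1)[OF x Bu Bu0] .
  have q1_0: "0 \<le> q1" unfolding q1_def using Bu0 g_nonneg phi_facts by (intro integral_nonneg_AE AE_I2) auto
  have q2_0: "0 \<le> q2" unfolding q2_def using Bv0 g_nonneg phi_facts by (intro integral_nonneg_AE AE_I2) auto
  have q2e: "q2 = r * q - q1"
  proof -
    have "q2 = (\<integral>y. r * (g (Suc p) y * B y) - g (Suc p) y * (B y * u y) \<partial>phi)"
      unfolding q2_def by (intro Bochner_Integration.integral_cong refl) (simp add: algebra_simps)
    also have "\<dots> = r * q - q1" using iq iq1 unfolding q_def q1_def by simp
    finally show ?thesis .
  qed
  have ev: "Qop M g p (\<lambda>y. B y * (r - u y)) x = r * Qop M g p B x - Qop M g p (\<lambda>y. B y * u y) x"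
  proof -
    have "Qop M g p (\<lambda>y. B y * (r - u y)) x = Qop M g p (\<lambda>y. r * B y + (-1) * (B y * u y)) x"
      by (intro Qop_cong[OF x]) (simp add: algebra_simps)
    also have "\<dots> = Qop M g p (\<lambda>y. r * B y) x + Qop M g p (\<lambda>y. (-1) * (B y * u y)) x"
      by (rule Qop_add[OF x bm_cmult[OF B] bm_cmult[OF Bu]])
    also have "\<dots> = r * Qop M g p B x - Qop M g p (\<lambda>y. B y * u y) x"
      by (simp only: Qop_scale)
    finally show ?thesis .
  qed
  have A1: "sigm * q1 \<le> Qop M g p (\<lambda>y. B y * u y) x" using minor(2)[OF x Bu Bu0] unfolding q1_def .
  have A4: "sigm * q1 \<le> Qop M g p (\<lambda>y. B y * u y) x'" using minor(2)[OF x' Bu Bu0] unfolding q1_def .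
  have A2: "sigm * q2 \<le> r * Qop M g p B x - Qop M g p (\<lambda>y. B y * u y) x"
      using minor(2)[OF x Bv Bv0, of p] ev unfolding q2_def by simp
  have A3: "Qop M g p B x \<le> sigp * q" using minor(3)[OF x B B0] unfolding q_def .
  have A5: "Qop M g p B x' \<le> sigp * q" using minor(3)[OF x' B B0] unfolding q_def .
  show ?thesis by (rule arith_contr[OF sig_pos sig_lt b b' q1_0 q2_0 q2e A1 A2 A3 A4 A5])
qed

lemma contrN:
  assumes f: "bm f" and fo: "\<And>y y'. y \<in> space X \<Longrightarrow> y' \<in> space X \<Longrightarrow> f y - f y' \<le> r"
    and pn: "p \<le> n"
  shows "\<And>x x'. x \<in> space X \<Longrightarrow> x' \<in> space X \<Longrightarrow>
    Qprod M g p n f x / G n p x - Qprod M g p n f x' / G n p x' \<le> (1 - sigm / sigp) ^ (n - p) * r"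
  using pn
proof (induction p rule: inc_induct)
  case base then show ?case using fo by (simp add: G_n Qprod_ge)
next
  case (step p x x')
  note pn = step(2) and IH = step(3) and x = step(4) and x' = step(5)
  define B where "B = G n (Suc p)"
  define F where "F = (\<lambda>y. Qprod M g (Suc p) n f y / B y)"
  define r' where "r' = (1 - sigm / sigp) ^ (n - Suc p) * r"
  have Bb: "bm B" unfolding B_def by (rule bm_G)
  have Bl: "\<And>y. y \<in> space X \<Longrightarrow> c ^ (n - Suc p) \<le> B y" unfolding B_def using G_lower pn by (simp add: Suc_leI)
  have Bp: "\<And>y. y \<in> space X \<Longrightarrow> 0 < B y" unfolding B_def using G_pos pn by (simp add: Suc_leI)
  have Fb: "bm F" unfolding F_def using bm_div[OF bm_Qprod[OF f] Bb _ Bl] c_pos by simp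
  have FF: "\<And>y y'. y \<in> space X \<Longrightarrow> y' \<in> space X \<Longrightarrow> F y - F y' \<le> r'"
    unfolding F_def B_def r'_def using IH by simp
  define m where "m = (INF y\<in>space X. F y)"
  have bdd: "bdd_below (F ` space X)"
    using FF[OF x] by (intro bdd_belowI2[where m="F x - r'"]) (auto simp: algebra_simps)
  have m1: "\<And>y. y \<in> space X \<Longrightarrow> m \<le> F y" unfolding m_def using bdd by (rule cINF_lower)
  have m2: "\<And>y. y \<in> space X \<Longrightarrow> F y - r' \<le> m"
    unfolding m_def using x FF by (intro cINF_greatest) (auto simp: algebra_simps)
  define u where "u = (\<lambda>y. F y - m)"
  have ub: "bm u" unfolding u_def by (rule bm_diff[OF Fb bm_const])
  have eqQ: "\<And>z. z \<in> space X \<Longrightarrow> Qprod M g p n f z = Qop M g p (\<lambda>y. B y * u y) z + m * Qop M g p B z"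
  proof -
    fix z assume z: "z \<in> space X"
    have "Qprod M g p n f z = Qop M g p (Qprod M g (Suc p) n f) z" using Qprod_Suc[OF pn] by simp
    also have "\<dots> = Qop M g p (\<lambda>y. B y * u y + m * B y) z"
      using Bp by (intro Qop_cong[OF z]) (force simp: u_def F_def algebra_simps)
    also have "\<dots> = Qop M g p (\<lambda>y. B y * u y) z + m * Qop M g p B z"
      using Qop_add[OF z bm_mult[OF Bb ub] bm_cmult[OF Bb]] Qop_scale by simp
    finally show "Qprod M g p n f z = Qop M g p (\<lambda>y. B y * u y) z + m * Qop M g p B z" .
  qed
  have Gp: "\<And>z. z \<in> space X \<Longrightarrow> G n p z = Qop M g p B z" unfolding B_def using G_Suc[OF pn] by simp
  have Gpos: "\<And>z. z \<in> space X \<Longrightarrow> 0 < Qop M g p B z" using G_pos[of p n] pn Gp by simp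
  have "Qprod M g p n f x / G n p x - Qprod M g p n f x' / G n p x'
      = Qop M g p (\<lambda>y. B y * u y) x / Qop M g p B x - Qop M g p (\<lambda>y. B y * u y) x' / Qop M g p B x'"
    using eqQ[OF x] eqQ[OF x'] Gp[OF x] Gp[OF x'] Gpos[OF x] Gpos[OF x'] by (simp add: add_divide_distrib)
  also have "\<dots> \<le> (1 - sigm / sigp) * r'"
  proof (rule contr1[OF x x' Bb _ ub _ _ Gpos[OF x] Gpos[OF x']])
    fix y assume y: "y \<in> space X"
    show "0 \<le> B y" using Bp[OF y] by simp
    show "0 \<le> u y" using m1[OF y] by (simp add: u_def)
    show "u y \<le> r'" using m2[OF y] by (simp add: u_def)
  qed
  also have "\<dots> = (1 - sigm / sigp) ^ (n - p) * r"
    unfolding r'_def using pn by (simp add: Suc_diff_Suc[symmetric])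
  finally show ?case .
qed

end

locale fk2 = fk +
  fixes R :: "nat \<Rightarrow> 'a \<Rightarrow> 'a measure" and w :: "nat \<Rightarrow> 'a \<Rightarrow> 'a \<Rightarrow> real"
    and eta :: "nat \<Rightarrow> 'a measure" and W :: real
  assumes R_kernel: "\<And>p. R p \<in> X \<rightarrow>\<^sub>M prob_algebra X"
    and w_meas: "\<And>p. (\<lambda>(x, y). w p x y) \<in> borel_measurable (X \<Otimes>\<^sub>M X)"
    and w_nonneg: "\<And>p x y. x \<in> space X \<Longrightarrow> y \<in> space X \<Longrightarrow> w p x y \<ge> 0"
    and w_density: "\<And>p x. x \<in> space X \<Longrightarrow>
          density (M p x) (\<lambda>y. ennreal (g (Suc p) y)) = density (R p x) (\<lambda>y. ennreal (w p x y))"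
    and eta_prob: "\<And>p. eta p \<in> space (prob_algebra X)"
    and eta_flow: "\<And>p f. f \<in> borel_measurable X \<Longrightarrow> bounded (f ` space X) \<Longrightarrow>
          (\<integral>x. f x \<partial>(eta (Suc p))) =
          (\<integral>x. Qop M g p f x \<partial>(eta p)) / (\<integral>x. Qop M g p (\<lambda>_. 1) x \<partial>(eta p))"
    and W_nonneg: "0 \<le> W"
    and W_ge: "\<And>p x y. x \<in> space X \<Longrightarrow> y \<in> space X \<Longrightarrow> w p x y \<le> W"
begin

lemma eta_facts: "prob_space (eta p)" "sets (eta p) = sets X" "space (eta p) = space X"
  using eta_prob[of p] by (auto simp: space_prob_algebra dest: sets_eq_imp_space_eq)

lemma Rx:
  assumes "x \<in> space X"
  shows "prob_space (R p x)" "sets (R p x) = sets X" "space (R p x) = space X"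
proof -
  have "R p x \<in> space (prob_algebra X)" using measurable_space[OF R_kernel assms] .
  then show "prob_space (R p x)" "sets (R p x) = sets X" "space (R p x) = space X"
    by (auto simp: space_prob_algebra dest: sets_eq_imp_space_eq)
qed

lemma int_eta: assumes "bm f" shows "integrable (eta p) f"
proof -
  obtain C where C: "C \<ge> 0" "\<And>x. x \<in> space X \<Longrightarrow> \<bar>f x\<bar> \<le> C" using bmD[OF assms] by blast
  have m: "f \<in> borel_measurable (eta p)"
    using bm_meas[OF assms] by (simp add: measurable_cong_sets[OF eta_facts(2) refl])
  show ?thesis
    using finite_measure.integrable_const_bound[OF prob_space.axioms(1)[OF eta_facts(1)], of f C p] m C eta_facts(3)
    by (auto intro!: AE_I2)
qed

definition Z :: "nat \<Rightarrow> real" where "Z p = (\<integral>x. Qop M g p (\<lambda>_. 1) x \<partial>(eta p))"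

lemma Z_ge: "c \<le> Z p"
proof -
  have "(\<integral>x. c \<partial>(eta p)) \<le> Z p" unfolding Z_def
    using c_le eta_facts(3) int_eta[OF bm_Qop[OF bm_const]] int_eta[OF bm_const] by (intro integral_mono) auto
  then show ?thesis using prob_space.prob_space[OF eta_facts(1)] by simp
qed

lemma flow: assumes "bm f" shows "(\<integral>x. f x \<partial>eta (Suc p)) = (\<integral>x. Qop M g p f x \<partial>eta p) / Z p"
proof -
  obtain C where C: "C \<ge> 0" "\<And>x. x \<in> space X \<Longrightarrow> \<bar>f x\<bar> \<le> C" using bmD[OF assms] by blast
  have "bounded (f ` space X)" using C unfolding bounded_real by auto
  then show ?thesis unfolding Z_def using eta_flow bm_meas[OF assms] by simp
qed

lemma intG_pos: "p \<le> n \<Longrightarrow> 0 < (\<integral>x. G n p x \<partial>eta p)"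
proof -
  assume pn: "p \<le> n"
  have "(\<integral>x. c ^ (n - p) \<partial>eta p) \<le> (\<integral>x. G n p x \<partial>eta p)"
    using G_lower[OF pn] eta_facts(3) int_eta[OF bm_G] int_eta[OF bm_const] by (intro integral_mono) auto
  then have "c ^ (n - p) \<le> (\<integral>x. G n p x \<partial>eta p)"
    using prob_space.prob_space[OF eta_facts(1)] by simp
  then show ?thesis using c_pos by (meson order_less_le_trans zero_less_power)
qed

lemma eta_iter:
  assumes f: "bm f" and pn: "p \<le> n"
  shows "(\<integral>x. f x \<partial>eta n) = (\<integral>x. Qprod M g p n f x \<partial>eta p) / (\<integral>x. G n p x \<partial>eta p)"
  using pn
proof (induction p rule: inc_induct)
  case base then show ?case using prob_space.prob_space[OF eta_facts(1)] by (simp add: Qprod_ge G_n)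
next
  case (step p)
  have Zp: "0 < Z p" using Z_ge c_pos by (meson order_less_le_trans)
  have "(\<integral>x. f x \<partial>eta n) = (\<integral>x. Qprod M g (Suc p) n f x \<partial>eta (Suc p)) / (\<integral>x. G n (Suc p) x \<partial>eta (Suc p))"
    by (rule step(3))
  also have "\<dots> = ((\<integral>x. Qprod M g p n f x \<partial>eta p) / Z p) / ((\<integral>x. G n p x \<partial>eta p) / Z p)"
    using flow[OF bm_Qprod[OF f]] flow[OF bm_G] Qprod_Suc[OF step(2)] G_Suc[OF step(2)] by simp
  also have "\<dots> = (\<integral>x. Qprod M g p n f x \<partial>eta p) / (\<integral>x. G n p x \<partial>eta p)"
    using Zp by simp
  finally show ?case .
qed


lemma Dbound:
  assumes h: "bm h" and ho: "\<And>y y'. y \<in> space X \<Longrightarrow> y' \<in> space X \<Longrightarrow> h y - h y' \<le> r"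
    and ln: "l < n" and y: "y \<in> space X"
  shows "\<bar>Qprod M g (Suc l) n (\<lambda>z. h z - (\<integral>u. h u \<partial>eta n)) y\<bar>
         \<le> (1 - sigm / sigp) ^ (n - Suc l) * r * G n (Suc l) y"
proof -
  define H where "H = (\<lambda>z. h z - (\<integral>u. h u \<partial>eta n))"
  define D where "D = Qprod M g (Suc l) n H"
  define Gb where "Gb = G n (Suc l)"
  define s where "s = (1 - sigm / sigp) ^ (n - Suc l) * r"
  define F where "F = (\<lambda>z. D z / Gb z)"
  have bmH: "bm H" unfolding H_def by (rule bm_diff[OF h bm_const])
  have Ho: "\<And>y y'. y \<in> space X \<Longrightarrow> y' \<in> space X \<Longrightarrow> H y - H y' \<le> r"
    unfolding H_def using ho by simp
  have sl: "Suc l \<le> n" using ln by simp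
  have FF: "\<And>a b. a \<in> space X \<Longrightarrow> b \<in> space X \<Longrightarrow> F a - F b \<le> s"
    unfolding F_def D_def Gb_def s_def using contrN[OF bmH Ho sl] by simp
  have Gbp: "\<And>z. z \<in> space X \<Longrightarrow> 0 < Gb z" unfolding Gb_def using G_pos[OF sl] by simp
  have bmD: "bm D" unfolding D_def by (rule bm_Qprod[OF bmH])
  have bmGb: "bm Gb" unfolding Gb_def by (rule bm_G)
  have bmF: "bm F" unfolding F_def
    using bm_div[OF bmD bmGb _ G_lower[OF sl, folded Gb_def]] c_pos by simp
  have P1: "prob_space (eta n)" by (rule eta_facts(1))
  have intH0: "(\<integral>x. H x \<partial>eta n) = 0"
    unfolding H_def using Bochner_Integration.integral_diff[OF int_eta[OF h] int_eta[OF bm_const], of n "\<integral>u. h u \<partial>eta n"]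
      prob_space.prob_space[OF P1] by simp
  have pG: "0 < (\<integral>x. Gb x \<partial>eta (Suc l))" unfolding Gb_def by (rule intG_pos[OF sl])
  have D0: "(\<integral>x. D x \<partial>eta (Suc l)) = 0"
    using eta_iter[OF bmH sl] intH0 pG unfolding D_def Gb_def by simp
  define I where "I = (\<integral>z. Gb z * (F y - F z) \<partial>eta (Suc l))"
  have bmK: "bm (\<lambda>z. Gb z * (F y - F z))" by (intro bm_mult[OF bmGb] bm_diff[OF bm_const bmF])
  have Ieq: "I = F y * (\<integral>x. Gb x \<partial>eta (Suc l))"
  proof -
    have "I = (\<integral>z. F y * Gb z - D z \<partial>eta (Suc l))"
      unfolding I_def using Gbp eta_facts(3)
      by (intro Bochner_Integration.integral_cong refl) (force simp: F_def algebra_simps)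
    also have "\<dots> = F y * (\<integral>x. Gb x \<partial>eta (Suc l)) - (\<integral>x. D x \<partial>eta (Suc l))"
      using int_eta[OF bmGb] int_eta[OF bmD] by simp
    finally show ?thesis using D0 by simp
  qed
  have Iup: "I \<le> s * (\<integral>x. Gb x \<partial>eta (Suc l))"
  proof -
    have "I \<le> (\<integral>z. s * Gb z \<partial>eta (Suc l))" unfolding I_def
    proof (intro integral_mono int_eta bmK bm_cmult bmGb)
      fix z assume "z \<in> space (eta (Suc l))"
      then have z: "z \<in> space X" using eta_facts(3) by simp
      show "Gb z * (F y - F z) \<le> s * Gb z" using FF[OF y z] Gbp[OF z] by (simp add: mult.commute mult_left_mono)
    qed
    then show ?thesis by simp
  qed
  have Ilo: "- s * (\<integral>x. Gb x \<partial>eta (Suc l)) \<le> I"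
  proof -
    have "(\<integral>z. (- s) * Gb z \<partial>eta (Suc l)) \<le> I" unfolding I_def
    proof (intro integral_mono int_eta bmK bm_cmult bmGb)
      fix z assume "z \<in> space (eta (Suc l))"
      then have z: "z \<in> space X" using eta_facts(3) by simp
      have "- s \<le> F y - F z" using FF[OF z y] by simp
      from mult_right_mono[OF this less_imp_le[OF Gbp[OF z]]]
      show "- s * Gb z \<le> Gb z * (F y - F z)" by (simp add: mult.commute)
    qed
    then show ?thesis by simp
  qed
  have "\<bar>F y\<bar> \<le> s"
  proof -
    have "F y * (\<integral>x. Gb x \<partial>eta (Suc l)) \<le> s * (\<integral>x. Gb x \<partial>eta (Suc l))" using Iup Ieq by simp
    then have a: "F y \<le> s" using pG by simp
    have "- s * (\<integral>x. Gb x \<partial>eta (Suc l)) \<le> F y * (\<integral>x. Gb x \<partial>eta (Suc l))" using Ilo Ieq by simp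
    then have b: "- s \<le> F y" using pG by (simp only: mult_le_cancel_right_pos)
    show ?thesis using a b by simp
  qed
  then have "\<bar>F y\<bar> * Gb y \<le> s * Gb y" using Gbp[OF y] by (simp add: mult_right_mono)
  moreover have "\<bar>D y\<bar> = \<bar>F y\<bar> * Gb y" using Gbp[OF y] by (simp add: F_def abs_mult)
  ultimately show ?thesis unfolding D_def H_def s_def Gb_def by simp
qed


lemma Rbound:
  assumes x: "x \<in> space X" and v: "bm v" and v0: "\<And>y. y \<in> space X \<Longrightarrow> 0 \<le> v y"
  shows "(\<integral>y. (w l x y)\<^sup>2 * v y \<partial>R l x) \<le> W * Qop M g l v x"
proof -
  have wX: "(\<lambda>y. w l x y) \<in> borel_measurable X"
    using measurable_Pair2[OF w_meas[of l] x] by simp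
  have sR: "sets (R l x) = sets X" by (rule Rx(2)[OF x])
  have sM: "sets (M l x) = sets X" by (rule Mx(2)[OF x])
  have vX: "v \<in> borel_measurable X" by (rule bm_meas[OF v])
  have wR: "(\<lambda>y. w l x y) \<in> borel_measurable (R l x)" using wX by (simp add: measurable_cong_sets[OF sR refl])
  have vR: "v \<in> borel_measurable (R l x)" using vX by (simp add: measurable_cong_sets[OF sR refl])
  have vM: "v \<in> borel_measurable (M l x)" using vX by (simp add: measurable_cong_sets[OF sM refl])
  have gM: "g (Suc l) \<in> borel_measurable (M l x)" using g_meas by (simp add: measurable_cong_sets[OF sM refl])
  have spR: "space (R l x) = space X" by (rule Rx(3)[OF x])
  have spM: "space (M l x) = space X" by (rule Mx(3)[OF x])
  have Q0: "0 \<le> Qop M g l v x" unfolding Qop_def using g_nonneg v0 spM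
    by (intro integral_nonneg_AE AE_I2) auto
  have "(\<integral>\<^sup>+y. ennreal ((w l x y)\<^sup>2 * v y) \<partial>R l x) \<le> (\<integral>\<^sup>+y. ennreal W * (ennreal (w l x y) * ennreal (v y)) \<partial>R l x)"
  proof (intro nn_integral_mono)
    fix y assume "y \<in> space (R l x)"
    then have y: "y \<in> space X" using spR by simp
    have "(w l x y)\<^sup>2 * v y = w l x y * (w l x y * v y)" by (simp add: power2_eq_square)
    also have "\<dots> \<le> W * (w l x y * v y)"
      using W_ge[OF x y] w_nonneg[OF x y] v0[OF y] by (intro mult_right_mono) auto
    finally have "ennreal ((w l x y)\<^sup>2 * v y) \<le> ennreal (W * (w l x y * v y))" by (rule ennreal_leI)
    also have "\<dots> = ennreal W * (ennreal (w l x y) * ennreal (v y))"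
      using W_nonneg w_nonneg[OF x y] v0[OF y] by (simp add: ennreal_mult)
    finally show "ennreal ((w l x y)\<^sup>2 * v y) \<le> ennreal W * (ennreal (w l x y) * ennreal (v y))" .
  qed
  also have "\<dots> = ennreal W * (\<integral>\<^sup>+y. ennreal (w l x y) * ennreal (v y) \<partial>R l x)"
    using wR vR by (intro nn_integral_cmult) auto
  also have "(\<integral>\<^sup>+y. ennreal (w l x y) * ennreal (v y) \<partial>R l x)
      = (\<integral>\<^sup>+y. ennreal (v y) \<partial>density (R l x) (\<lambda>y. ennreal (w l x y)))"
    using wR vR by (intro nn_integral_density[symmetric]) auto
  also have "\<dots> = (\<integral>\<^sup>+y. ennreal (v y) \<partial>density (M l x) (\<lambda>y. ennreal (g (Suc l) y)))"
    using w_density[OF x, of l] by simp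
  also have "\<dots> = (\<integral>\<^sup>+y. ennreal (g (Suc l) y) * ennreal (v y) \<partial>M l x)"
    using gM vM by (intro nn_integral_density) auto
  also have "\<dots> = (\<integral>\<^sup>+y. ennreal (g (Suc l) y * v y) \<partial>M l x)"
    using g_nonneg v0 spM by (intro nn_integral_cong) (simp add: ennreal_mult)
  also have "\<dots> = ennreal (Qop M g l v x)"
    unfolding Qop_def using g_nonneg v0 spM
    by (intro nn_integral_eq_integral int_gf[OF x v] AE_I2) auto
  finally have le: "(\<integral>\<^sup>+y. ennreal ((w l x y)\<^sup>2 * v y) \<partial>R l x) \<le> ennreal W * ennreal (Qop M g l v x)" .
  have "(\<integral>y. (w l x y)\<^sup>2 * v y \<partial>R l x) = enn2real (\<integral>\<^sup>+y. ennreal ((w l x y)\<^sup>2 * v y) \<partial>R l x)"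
    using wR vR v0 spR by (intro integral_eq_nn_integral AE_I2) auto
  also have "\<dots> \<le> enn2real (ennreal W * ennreal (Qop M g l v x))"
    using le by (intro enn2real_mono) (auto simp: ennreal_mult_less_top)
  also have "\<dots> = W * Qop M g l v x" using W_nonneg Q0 by (simp add: ennreal_mult[symmetric])
  finally show ?thesis .
qed


lemma term_bound:
  assumes h: "bm h" and ho: "\<And>y y'. y \<in> space X \<Longrightarrow> y' \<in> space X \<Longrightarrow> h y - h y' \<le> r"
    and ln: "l < n"
  shows "(\<integral>x. (\<integral>y. (w l x y)\<^sup>2 *
              (Qprod M g (Suc l) n (\<lambda>z. h z - (\<integral>u. h u \<partial>eta n)) y)\<^sup>2 \<partial>(R l x)) \<partial>(eta l))
        / (\<integral>x. Qprod M g l n (\<lambda>_. 1) x \<partial>(eta l))\<^sup>2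
      \<le> W * ((1 - sigm / sigp) ^ (n - Suc l) * r)\<^sup>2 * (sigp / sigm) / c"
proof -
  define H where "H = (\<lambda>z. h z - (\<integral>u. h u \<partial>eta n))"
  define D where "D = Qprod M g (Suc l) n H"
  define Gb where "Gb = G n (Suc l)"
  define s where "s = (1 - sigm / sigp) ^ (n - Suc l) * r"
  define K where "K = sigp / sigm"
  define Gbar where "Gbar = (\<integral>x. Gb x \<partial>eta (Suc l))"
  have sl: "Suc l \<le> n" using ln by simp
  have K0: "0 \<le> K" unfolding K_def using sig_pos sig_lt by simp
  have bmH: "bm H" unfolding H_def by (rule bm_diff[OF h bm_const])
  have bmD: "bm D" unfolding D_def by (rule bm_Qprod[OF bmH])
  have bmGb: "bm Gb" unfolding Gb_def by (rule bm_G)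
  have Gbp: "\<And>z. z \<in> space X \<Longrightarrow> 0 < Gb z" unfolding Gb_def using G_pos[OF sl] by simp
  have pG: "0 < Gbar" unfolding Gbar_def Gb_def by (rule intG_pos[OF sl])
  have Ds: "\<And>y. y \<in> space X \<Longrightarrow> \<bar>D y\<bar> \<le> s * Gb y"
    unfolding D_def H_def s_def Gb_def using Dbound[OF h ho ln] by simp
  have GbK: "\<And>y. y \<in> space X \<Longrightarrow> Gb y \<le> K * Gbar"
  proof -
    fix y assume y: "y \<in> space X"
    have "(\<integral>z. Gb y \<partial>eta (Suc l)) \<le> (\<integral>z. K * Gb z \<partial>eta (Suc l))"
    proof (intro integral_mono int_eta bm_const bm_cmult bmGb)
      fix z assume "z \<in> space (eta (Suc l))"
      then have z: "z \<in> space X" using eta_facts(3) by simp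
      show "Gb y \<le> K * Gb z" unfolding Gb_def K_def by (rule G_ratio[OF sl y z])
    qed
    then show "Gb y \<le> K * Gbar" unfolding Gbar_def using prob_space.prob_space[OF eta_facts(1)] by simp
  qed
  define cst where "cst = s\<^sup>2 * K * Gbar"
  have cst0: "0 \<le> cst" unfolding cst_def using K0 pG by simp
  have D2: "\<And>y. y \<in> space X \<Longrightarrow> (D y)\<^sup>2 \<le> cst * Gb y"
  proof -
    fix y assume y: "y \<in> space X"
    have "(D y)\<^sup>2 = \<bar>D y\<bar>\<^sup>2" by simp
    also have "\<dots> \<le> (s * Gb y)\<^sup>2" using Ds[OF y] by (intro power_mono) auto
    also have "\<dots> = s\<^sup>2 * Gb y * Gb y" by (simp add: power2_eq_square)
    also have "\<dots> \<le> s\<^sup>2 * Gb y * (K * Gbar)" using GbK[OF y] Gbp[OF y] by (intro mult_left_mono) auto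
    also have "\<dots> = cst * Gb y" unfolding cst_def by simp
    finally show "(D y)\<^sup>2 \<le> cst * Gb y" .
  qed
  have inner: "\<And>x. x \<in> space X \<Longrightarrow> (\<integral>y. (w l x y)\<^sup>2 * (D y)\<^sup>2 \<partial>R l x) \<le> W * cst * G n l x"
  proof -
    fix x assume x: "x \<in> space X"
    have "(\<integral>y. (w l x y)\<^sup>2 * (D y)\<^sup>2 \<partial>R l x) \<le> W * Qop M g l (\<lambda>y. (D y)\<^sup>2) x"
      using Rbound[OF x _, of "\<lambda>y. (D y)\<^sup>2" l] bm_mult[OF bmD bmD] by (simp add: power2_eq_square)
    also have "\<dots> \<le> W * Qop M g l (\<lambda>y. cst * Gb y) x"
      using W_nonneg D2 bm_mult[OF bmD bmD] bm_cmult[OF bmGb]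
      by (intro mult_left_mono Qop_mono[OF x]) (auto simp: power2_eq_square)
    also have "\<dots> = W * cst * G n l x" using Qop_scale G_Suc[OF ln] unfolding Gb_def by simp
    finally show "(\<integral>y. (w l x y)\<^sup>2 * (D y)\<^sup>2 \<partial>R l x) \<le> W * cst * G n l x" .
  qed
  have num: "(\<integral>x. (\<integral>y. (w l x y)\<^sup>2 * (D y)\<^sup>2 \<partial>R l x) \<partial>eta l) \<le> (\<integral>x. W * cst * G n l x \<partial>eta l)"
  proof (rule integral_mono_AE')
    show "integrable (eta l) (\<lambda>x. W * cst * G n l x)" by (intro int_eta bm_cmult bm_G)
    show "AE x in eta l. (\<integral>y. (w l x y)\<^sup>2 * (D y)\<^sup>2 \<partial>R l x) \<le> W * cst * G n l x"
      using inner eta_facts(3) by (intro AE_I2) auto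
    show "AE x in eta l. 0 \<le> W * cst * G n l x"
    proof (intro AE_I2)
      fix x assume "x \<in> space (eta l)"
      then have "0 < G n l x" using G_pos[of l n x] ln eta_facts(3) by simp
      then show "0 \<le> W * cst * G n l x" using W_nonneg cst0 by simp
    qed
  qed
  have intGl: "(\<integral>x. G n l x \<partial>eta l) = Gbar * Z l"
  proof -
    have "Gbar = (\<integral>x. Qop M g l Gb x \<partial>eta l) / Z l" unfolding Gbar_def by (rule flow[OF bmGb])
    moreover have "Qop M g l Gb = G n l" unfolding Gb_def using G_Suc[OF ln] by simp
    moreover have "0 < Z l" using Z_ge c_pos by (meson order_less_le_trans)
    ultimately show ?thesis by simp
  qed
  have Zp: "0 < Z l" using Z_ge c_pos by (meson order_less_le_trans)
  have den: "(\<integral>x. Qprod M g l n (\<lambda>_. 1) x \<partial>(eta l)) = Gbar * Z l" using intGl unfolding G_def .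
  have "(\<integral>x. (\<integral>y. (w l x y)\<^sup>2 * (D y)\<^sup>2 \<partial>R l x) \<partial>eta l) / (Gbar * Z l)\<^sup>2
       \<le> (W * cst * (Gbar * Z l)) / (Gbar * Z l)\<^sup>2"
    using num intGl pG Zp by (intro divide_right_mono) simp_all
  also have "\<dots> = W * s\<^sup>2 * K / Z l" unfolding cst_def using pG Zp by (simp add: power2_eq_square field_simps)
  also have "\<dots> \<le> W * s\<^sup>2 * K / c"
    using W_nonneg K0 Z_ge[of l] c_pos Zp by (intro divide_left_mono mult_nonneg_nonneg) auto
  finally show ?thesis unfolding den D_def H_def s_def K_def .
qed


lemma sigma_bound:
  assumes h: "bm h" and ho: "\<And>y y'. y \<in> space X \<Longrightarrow> y' \<in> space X \<Longrightarrow> h y - h y' \<le> r"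
  shows "sigma2 X M g R w eta n h
     \<le> W * r\<^sup>2 / ((1 - (1 - sigm / sigp))\<^sup>2 * (1 - (1 - sigm / sigp)\<^sup>2)\<^sup>2 * c)"
proof -
  define \<rho> where "\<rho> = 1 - sigm / sigp"
  define q where "q = \<rho>\<^sup>2"
  define K where "K = sigp / sigm"
  have r0: "0 < \<rho>" "\<rho> < 1" unfolding \<rho>_def using sig_pos sig_lt by (auto simp: field_simps)
  have q01: "0 \<le> q" "q < 1" unfolding q_def using r0 power_strict_mono[of \<rho> 1 2] by auto
  have K0: "0 \<le> K" unfolding K_def using sig_pos sig_lt by simp
  have "sigma2 X M g R w eta n h \<le> (\<Sum>l<n. real (n - l) * (W * (\<rho> ^ (n - Suc l) * r)\<^sup>2 * K / c))"
    unfolding sigma2_def \<rho>_def K_def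
    apply (intro sum_mono)
    apply (rule aux_mono[OF term_bound[OF h ho] of_nat_0_le_iff])
    apply auto
    done
  also have "\<dots> = (W * r\<^sup>2 * K / c) * (\<Sum>l<n. real (Suc (n - Suc l)) * q ^ (n - Suc l))"
    unfolding sum_distrib_left q_def
    by (intro sum.cong refl) (simp add: power_mult_distrib power_mult[symmetric] mult.commute Suc_diff_Suc)
  also have "(\<Sum>l<n. real (Suc (n - Suc l)) * q ^ (n - Suc l)) = (\<Sum>j<n. real (Suc j) * q ^ j)"
    by (rule sum.nat_diff_reindex)
  also have "(W * r\<^sup>2 * K / c) * (\<Sum>j<n. real (Suc j) * q ^ j) \<le> (W * r\<^sup>2 * K / c) * (1 / (1 - q)\<^sup>2)"
    using W_nonneg K0 c_pos sum_geom_le[OF q01] by (intro mult_left_mono) auto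
  also have "\<dots> \<le> W * r\<^sup>2 / ((1 - \<rho>)\<^sup>2 * (1 - q)\<^sup>2 * c)"
  proof -
    have eK: "K = 1 / (1 - \<rho>)" unfolding K_def \<rho>_def using sig_pos by simp
    have "1 / (1 - \<rho>) \<le> 1 / (1 - \<rho>)\<^sup>2"
      using r0 by (simp add: divide_simps power2_eq_square mult_le_cancel_left1)
    then have "K \<le> 1 / (1 - \<rho>)\<^sup>2" using eK by simp
    then have "(W * r\<^sup>2 / c / (1 - q)\<^sup>2) * K \<le> (W * r\<^sup>2 / c / (1 - q)\<^sup>2) * (1 / (1 - \<rho>)\<^sup>2)"
      using W_nonneg c_pos by (intro mult_left_mono) auto
    then show ?thesis by (simp add: field_simps)
  qed
  finally show ?thesis unfolding q_def \<rho>_def .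
qed

end

theorem mainTheorem14:
  fixes X :: "'a measure"
    and M R :: "nat \<Rightarrow> 'a \<Rightarrow> 'a measure"
    and g :: "nat \<Rightarrow> 'a \<Rightarrow> real"
    and w :: "nat \<Rightarrow> 'a \<Rightarrow> 'a \<Rightarrow> real"
    and eta :: "nat \<Rightarrow> 'a measure"
    and phi :: "'a measure"
    and sigm sigp :: real
    and n :: nat and h :: "'a \<Rightarrow> real"
  assumes M_kernel: "\<And>p. M p \<in> X \<rightarrow>\<^sub>M prob_algebra X"
    and R_kernel: "\<And>p. R p \<in> X \<rightarrow>\<^sub>M prob_algebra X"
    and g_meas: "\<And>p. g p \<in> borel_measurable X"
    and g_nonneg: "\<And>p x. x \<in> space X \<Longrightarrow> g p x \<ge> 0"
    and Q1_bdd: "\<And>p. bdd_above ((\<lambda>x. Qop M g p (\<lambda>_. 1) x) ` space X)"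
    and w_meas: "\<And>p. (\<lambda>(x, y). w p x y) \<in> borel_measurable (X \<Otimes>\<^sub>M X)"
    and w_nonneg: "\<And>p x y. x \<in> space X \<Longrightarrow> y \<in> space X \<Longrightarrow> w p x y \<ge> 0"
    and w_bdd: "\<And>p. bdd_above ((\<lambda>(x, y). w p x y) ` (space X \<times> space X))"
    and w_density: "\<And>p x. x \<in> space X \<Longrightarrow>
          density (M p x) (\<lambda>y. ennreal (g (Suc p) y)) = density (R p x) (\<lambda>y. ennreal (w p x y))"
    and eta0: "eta 0 \<in> space (prob_algebra X)"
    and eta_prob: "\<And>p. eta p \<in> space (prob_algebra X)"
    and eta_flow: "\<And>p f. f \<in> borel_measurable X \<Longrightarrow> bounded (f ` space X) \<Longrightarrow>
          (\<integral>x. f x \<partial>(eta (Suc p))) =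
          (\<integral>x. Qop M g p f x \<partial>(eta p)) / (\<integral>x. Qop M g p (\<lambda>_. 1) x \<partial>(eta p))"
    and phi_prob: "phi \<in> space (prob_algebra X)"
    and sig_pos: "0 < sigm" and sig_lt: "sigm < sigp"
    and MG1: "\<And>p x A. x \<in> space X \<Longrightarrow> A \<in> sets X \<Longrightarrow>
          sigm * measure phi A \<le> measure (M p x) A \<and> measure (M p x) A \<le> sigp * measure phi A"
    and MG2: "bdd_above ((\<lambda>(p, x, y). w p x y) ` (UNIV \<times> space X \<times> space X))"
    and MG3: "(INF px \<in> UNIV \<times> space X. Qop M g (fst px) (\<lambda>_. 1) (snd px)) > 0"
    and n_pos: "n \<ge> 1"
    and h_meas: "h \<in> borel_measurable X"
    and h_bdd: "bounded (h ` space X)"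
  shows "sigma2 X M g R w eta n h
     \<le> (SUP pxy \<in> UNIV \<times> space X \<times> space X. w (fst pxy) (fst (snd pxy)) (snd (snd pxy)))
        * (osc X h)\<^sup>2
        / ((1 - (1 - sigm / sigp))\<^sup>2 * (1 - (1 - sigm / sigp)\<^sup>2)\<^sup>2
           * (INF px \<in> UNIV \<times> space X. Qop M g (fst px) (\<lambda>_. 1) (snd px)))"
proof -
  define W where "W = (SUP pxy \<in> UNIV \<times> space X \<times> space X. w (fst pxy) (fst (snd pxy)) (snd (snd pxy)))"
  define c where "c = (INF px \<in> UNIV \<times> space X. Qop M g (fst px) (\<lambda>_. 1) (snd px))"
  define r where "r = osc X h"
  have e0: "prob_space (eta 0)" "sets (eta 0) = sets X"
    using eta_prob[of 0] by (auto simp: space_prob_algebra)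
  then have sp0: "space (eta 0) = space X" by (metis sets_eq_imp_space_eq)
  obtain x0 where x0: "x0 \<in> space X" using prob_space.not_empty[OF e0(1)] sp0 by auto
  have Qnn: "0 \<le> Qop M g p (\<lambda>_. 1) x" if x: "x \<in> space X" for p x
  proof -
    have "M p x \<in> space (prob_algebra X)" using measurable_space[OF M_kernel x] .
    then have "sets (M p x) = sets X" by (auto simp: space_prob_algebra)
    then have "space (M p x) = space X" by (metis sets_eq_imp_space_eq)
    then show ?thesis unfolding Qop_def using g_nonneg by (intro integral_nonneg_AE AE_I2) auto
  qed
  have c_le: "c \<le> Qop M g p (\<lambda>_. 1) x" if x: "x \<in> space X" for p x
  proof -
    have "bdd_below ((\<lambda>px. Qop M g (fst px) (\<lambda>_. 1) (snd px)) ` (UNIV \<times> space X))"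
      using Qnn by (intro bdd_belowI2[where m=0]) auto
    from cINF_lower[OF this, of "(p, x)"] show ?thesis unfolding c_def using x by simp
  qed
  have c_pos: "0 < c" unfolding c_def using MG3 .
  have feq: "(\<lambda>(p, x, y). w p x y) = (\<lambda>pxy. w (fst pxy) (fst (snd pxy)) (snd (snd pxy)))" by auto
  have W_ge: "w p x y \<le> W" if "x \<in> space X" "y \<in> space X" for p x y
  proof -
    have b: "bdd_above ((\<lambda>pxy. w (fst pxy) (fst (snd pxy)) (snd (snd pxy))) ` (UNIV \<times> space X \<times> space X))"
      using MG2 feq by simp
    have m: "(p, x, y) \<in> UNIV \<times> space X \<times> space X" using that by simp
    from cSUP_upper[OF m b] show ?thesis unfolding W_def by simp
  qed
  have W_nonneg: "0 \<le> W" using w_nonneg[OF x0 x0, of 0] W_ge[OF x0 x0, of 0] by simp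
  obtain C where C: "\<And>x. x \<in> space X \<Longrightarrow> \<bar>h x\<bar> \<le> C" using h_bdd unfolding bounded_real by auto
  have ho: "h y - h y' \<le> r" if "y \<in> space X" "y' \<in> space X" for y y'
  proof -
    have hab: "\<bar>h a - h b\<bar> \<le> 2 * C" if "a \<in> space X" "b \<in> space X" for a b
      using abs_triangle_ineq4[of "h a" "h b"] C[OF that(1)] C[OF that(2)] by linarith
    have "bdd_above ((\<lambda>xy. \<bar>h (fst xy) - h (snd xy)\<bar>) ` (space X \<times> space X))"
    proof (rule bdd_aboveI2)
      fix xy assume "xy \<in> space X \<times> space X"
      then show "\<bar>h (fst xy) - h (snd xy)\<bar> \<le> 2 * C" using hab[of "fst xy" "snd xy"] by auto
    qed
    then have "\<bar>h (fst (y, y')) - h (snd (y, y'))\<bar> \<le> r"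
      unfolding r_def osc_def using that by (intro cSUP_upper) auto
    then show ?thesis by simp
  qed
  interpret F: fk2 X M g phi sigm sigp c R w eta W
    by (intro fk2.intro fk.intro fk2_axioms.intro)
      (simp_all add: M_kernel g_meas g_nonneg Q1_bdd phi_prob sig_pos sig_lt MG1 c_pos c_le
         R_kernel w_meas w_nonneg w_density eta_prob eta_flow W_nonneg W_ge)
  have hb: "F.bm h" unfolding F.bm_def using h_meas C by blast
  have "sigma2 X M g R w eta n h
     \<le> W * r\<^sup>2 / ((1 - (1 - sigm / sigp))\<^sup>2 * (1 - (1 - sigm / sigp)\<^sup>2)\<^sup>2 * c)"
    by (rule F.sigma_bound[OF hb ho])
  then show ?thesis unfolding W_def r_def c_def .
qed

end
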